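(* Let $E$ be a separable real Hilbert space, $0<p<\infty$, $\mu\in\mathcal{W}_p(E)$, $x\in E\setminus\{0\}$ and $a,b\in\mathbb{R}$ with $a\neq b$. For $0\le\alpha\le1$ let $\zeta^\alpha_{a,b}(x):=\alpha\delta_{ax}+(1-\alpha)\delta_{bx}$, and set $m:=\min\{d_{\mathcal{W}_p}(\mu,\zeta^\alpha_{a,b}(x))\colon 0\le\alpha\le1\}$. Then $$\mu\big(B(ax,bx)\big)=\max\{\alpha\colon d_{\mathcal{W}_p}(\mu,\zeta^\alpha_{a,b}(x))=m\}-\min\{\alpha\colon d_{\mathcal{W}_p}(\mu,\zeta^\alpha_{a,b}(x))=m\},$$ where $B(y,z):=\{w\in E\colon\|y-w\|=\|z-w\|\}$ is the bisector hyperplane of $y\neq z$.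
   Context: For $0<p<\infty$, $\mathcal{W}_p(E)$ is the set of Borel probability measures $\mu$ on $E$ with $\int_E\|x\|^p\,d\mu(x)<\infty$, equipped with $d_{\mathcal{W}_p}(\mu,\nu)=\big(\inf_{\pi\in\Pi(\mu,\nu)}\int_{E\times E}\|x-y\|^p\,d\pi(x,y)\big)^{\min\{1/p,1\}}$, where $\Pi(\mu,\nu)$ is the set of Borel probability measures on $E\times E$ with marginals $\mu$ and $\nu$. *)

theory Defs
  imports "HOL-Probability.Probability"
begin

definition Wp_space :: "real \<Rightarrow> ('a::{real_normed_vector, second_countable_topology}) measure set" where
  "Wp_space p = {\<mu>. prob_space \<mu> \<and> sets \<mu> = sets borel \<and>
      (\<integral>\<^sup>+ x. ennreal (norm x powr p) \<partial>\<mu>) < \<infinity>}"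

definition couplings :: "'a::{real_normed_vector, second_countable_topology} measure \<Rightarrow> 'a measure \<Rightarrow> ('a \<times> 'a) measure set" where
  "couplings \<mu> \<nu> = {\<pi>. prob_space \<pi> \<and> sets \<pi> = sets borel \<and>
      distr \<pi> borel fst = \<mu> \<and> distr \<pi> borel snd = \<nu>}"

definition wasserstein :: "real \<Rightarrow> 'a::{real_normed_vector, second_countable_topology} measure \<Rightarrow> 'a measure \<Rightarrow> real" where
  "wasserstein p \<mu> \<nu> =
     (enn2real (INF \<pi>\<in>couplings \<mu> \<nu>. \<integral>\<^sup>+ z. ennreal (norm (fst z - snd z) powr p) \<partial>\<pi>)) powr (min (1/p) 1)"

definition zeta :: "real \<Rightarrow> real \<Rightarrow> real \<Rightarrow> 'a::{real_normed_vector, second_countable_topology} \<Rightarrow> 'a measure" where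
  "zeta \<alpha> a b x = measure_of UNIV (sets borel)
     (\<lambda>A. ennreal \<alpha> * indicator A (a *\<^sub>R x) + ennreal (1 - \<alpha>) * indicator A (b *\<^sub>R x))"

definition bisector :: "'a::real_normed_vector \<Rightarrow> 'a \<Rightarrow> 'a set" where
  "bisector y z = {w. norm (y - w) = norm (z - w)}"

end

theory Submission
  imports Defs
begin

lemma zeta_sets: "sets (zeta \<alpha> a b x) = sets borel"
  unfolding zeta_def by (simp add: sets_measure_of_conv) (metis sets.sigma_sets_eq space_borel)

lemma zeta_emeasure:
  fixes x :: "'a::{real_normed_vector, second_countable_topology}"
  assumes "0 \<le> \<alpha>" "\<alpha> \<le> 1" "A \<in> sets borel"
  shows "emeasure (zeta \<alpha> a b x) A = ennreal \<alpha> * indicator A (a *\<^sub>R x) + ennreal (1 - \<alpha>) * indicator A (b *\<^sub>R x)"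
  unfolding zeta_def
proof (rule emeasure_measure_of_sigma)
  show "sigma_algebra UNIV (sets (borel::'a measure))"
    by (metis sets.sigma_algebra_axioms space_borel)
  show "positive (sets borel) (\<lambda>A. ennreal \<alpha> * indicator A (a *\<^sub>R x) + ennreal (1 - \<alpha>) * indicator A (b *\<^sub>R x))"
    by (simp add: positive_def)
  show "countably_additive (sets borel) (\<lambda>A. ennreal \<alpha> * indicator A (a *\<^sub>R x) + ennreal (1 - \<alpha>) * indicator A (b *\<^sub>R x))"
    unfolding countably_additive_def
  proof (intro allI impI)
    fix F :: "nat \<Rightarrow> 'a set" assume "range F \<subseteq> sets borel" "disjoint_family F"
    then show "(\<Sum>i. ennreal \<alpha> * indicator (F i) (a *\<^sub>R x) + ennreal (1 - \<alpha>) * indicator (F i) (b *\<^sub>R x)) =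
       ennreal \<alpha> * indicator (\<Union> (range F)) (a *\<^sub>R x) + ennreal (1 - \<alpha>) * indicator (\<Union> (range F)) (b *\<^sub>R x)"
      by (simp add: suminf_add[symmetric] ennreal_suminf_cmult suminf_indicator)
  qed
qed (use assms in auto)

lemma zeta_swap: "zeta \<alpha> a b x = zeta (1 - \<alpha>) b a x"
  unfolding zeta_def by (simp add: add.commute)

lemma U_prob: "prob_space (uniform_measure lborel {0..1::real})"
  by (rule prob_space_uniform_measure) auto

lemma U_sets: "sets (uniform_measure lborel {0..1::real}) = sets borel"
  by simp

lemma U_less: assumes "0 \<le> t" "t \<le> 1"
  shows "emeasure (uniform_measure lborel {0..1::real}) {u. u < t} = ennreal t"
proof -
  have "{0..1} \<inter> {u. u < t} = {0..<t}" using assms by auto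
  then show ?thesis using assms by (simp add: divide_ennreal_def)
qed

lemma U_ge: assumes "0 \<le> t" "t \<le> 1"
  shows "emeasure (uniform_measure lborel {0..1::real}) {u. \<not> u < t} = ennreal (1 - t)"
proof -
  have "{0..1} \<inter> {u. \<not> u < t} = {t..1}" using assms by auto
  then show ?thesis using assms by (simp add: divide_ennreal_def)
qed

lemma meas_test:
  fixes \<mu> :: "'a::{real_normed_vector, second_countable_topology} measure"
  assumes "sets \<mu> = sets borel" "\<phi> \<in> borel_measurable borel"
  shows "(\<lambda>(w,u). (w, if u < \<phi> w then y else z)) \<in> measurable (\<mu> \<Otimes>\<^sub>M uniform_measure lborel {0..1::real}) (borel :: ('a \<times> 'a) measure)"
proof -
  have s: "sets (\<mu> \<Otimes>\<^sub>M uniform_measure lborel {0..1::real}) = sets (borel \<Otimes>\<^sub>M borel)"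
    by (rule sets_pair_measure_cong) (use assms in auto)
  have "(\<lambda>(w,u). (w, if u < \<phi> w then y else z)) \<in> measurable (borel \<Otimes>\<^sub>M (borel::real measure)) (borel \<Otimes>\<^sub>M (borel :: 'a measure))"
    using assms(2) by measurable
  then have "(\<lambda>(w,u). (w, if u < \<phi> w then y else z)) \<in> measurable (borel \<Otimes>\<^sub>M (borel::real measure)) (borel :: ('a \<times> 'a) measure)"
    by (simp only: borel_prod)
  then show ?thesis
    by (subst measurable_cong_sets[OF s refl])
qed

lemma fst_borel: "fst \<in> borel_measurable (borel :: ('a::second_countable_topology \<times> 'b::second_countable_topology) measure)"
  by (subst borel_prod[symmetric]) measurable

lemma snd_borel: "snd \<in> borel_measurable (borel :: ('a::second_countable_topology \<times> 'b::second_countable_topology) measure)"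
  by (subst borel_prod[symmetric]) measurable

lemma U_split_emeasure:
  assumes "0 \<le> t" "t \<le> 1"
  shows "emeasure (uniform_measure lborel {0..1::real}) {u. (if u < t then y else z) \<in> A}
     = ennreal t * indicator A y + ennreal (1 - t) * indicator A z"
proof -
  have "ennreal t + ennreal (1 - t) = 1" using assms by (simp add: ennreal_plus[symmetric] del: ennreal_plus)
  moreover have "emeasure (uniform_measure lborel {0..1::real}) UNIV = 1"
    using prob_space.emeasure_space_1[OF U_prob] by simp
  ultimately show ?thesis using assms U_less[OF assms] U_ge[OF assms]
    by (cases "y \<in> A"; cases "z \<in> A") (auto simp: indicator_def)
qed

lemma U_split_integral:
  assumes "0 \<le> t" "t \<le> 1"
  shows "(\<integral>\<^sup>+u. G (if u < t then y else z) \<partial>uniform_measure lborel {0..1::real})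
     = ennreal t * G y + ennreal (1 - t) * G z"
proof -
  have m1: "{u::real. u < t} \<in> sets borel" by measurable
  have m2: "{u::real. \<not> u < t} \<in> sets borel" by measurable
  have "(\<integral>\<^sup>+u. G (if u < t then y else z) \<partial>uniform_measure lborel {0..1::real})
     = (\<integral>\<^sup>+u. G y * indicator {u. u < t} u + G z * indicator {u. \<not> u < t} u \<partial>uniform_measure lborel {0..1::real})"
    by (rule nn_integral_cong) (auto simp: indicator_def)
  also have "\<dots> = G y * emeasure (uniform_measure lborel {0..1::real}) {u. u < t}
       + G z * emeasure (uniform_measure lborel {0..1::real}) {u. \<not> u < t}"
    using m1 m2 by (subst nn_integral_add) (auto simp: nn_integral_cmult_indicator)
  also have "\<dots> = ennreal t * G y + ennreal (1 - t) * G z"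
    using U_less[OF assms] U_ge[OF assms] by (simp add: mult.commute)
  finally show ?thesis .
qed

lemma coupling_exists:
  fixes \<mu> :: "'a::{real_normed_vector, second_countable_topology} measure"
  assumes mu: "prob_space \<mu>" "sets \<mu> = sets borel"
    and phim: "\<phi> \<in> borel_measurable borel" and phib: "\<And>w. 0 \<le> \<phi> w \<and> \<phi> w \<le> 1"
    and phii: "(\<integral>w. \<phi> w \<partial>\<mu>) = \<alpha>"
    and G: "G \<in> borel_measurable (borel :: ('a \<times> 'a) measure)"
  shows "\<exists>\<pi>\<in>couplings \<mu> (zeta \<alpha> a b x).
     (\<integral>\<^sup>+z. G z \<partial>\<pi>) = (\<integral>\<^sup>+w. ennreal (\<phi> w) * G (w, a *\<^sub>R x) + ennreal (1 - \<phi> w) * G (w, b *\<^sub>R x) \<partial>\<mu>)"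
proof -
  define y where "y = a *\<^sub>R x"
  define z where "z = b *\<^sub>R x"
  define U where "U = uniform_measure lborel {0..1::real}"
  define P where "P = \<mu> \<Otimes>\<^sub>M U"
  define g where "g = (\<lambda>(w,u::real). (w, if u < \<phi> w then y else z))"
  interpret U: prob_space U unfolding U_def by (rule U_prob)
  interpret M: prob_space \<mu> by (rule mu)
  interpret pair_prob_space \<mu> U ..
  have gm: "g \<in> measurable P borel"
    unfolding P_def g_def U_def by (rule meas_test[OF mu(2) phim])
  have sP: "sets P = sets (borel \<Otimes>\<^sub>M borel)"
    unfolding P_def U_def by (rule sets_pair_measure_cong) (use mu in auto)
  have spmu: "space \<mu> = UNIV" using sets_eq_imp_space_eq[OF mu(2)] by simp
  have spP: "space P = UNIV" unfolding P_def U_def by (simp add: space_pair_measure spmu)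
  have phim': "\<phi> \<in> borel_measurable \<mu>" using phim mu(2) measurable_cong_sets by blast
  have phiint: "integrable \<mu> \<phi>"
    by (rule M.integrable_const_bound[where B=1]) (use phib phim' in auto)
  have alpha01: "0 \<le> \<alpha>" "\<alpha> \<le> 1"
    using phii phib M.integral_le_const[of \<phi> 1] integral_nonneg_AE[of \<phi> \<mu>] phiint by auto
  have i1: "(\<integral>\<^sup>+w. ennreal (\<phi> w) \<partial>\<mu>) = ennreal \<alpha>"
    using phii phib phiint by (subst nn_integral_eq_integral) auto
  have i2: "(\<integral>\<^sup>+w. ennreal (1 - \<phi> w) \<partial>\<mu>) = ennreal (1 - \<alpha>)"
  proof -
    have "integrable \<mu> (\<lambda>w. 1 - \<phi> w)" using phiint by auto
    moreover have "(\<integral>w. 1 - \<phi> w \<partial>\<mu>) = 1 - \<alpha>"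
      using phiint phii by (subst Bochner_Integration.integral_diff) (auto simp: M.prob_space)
    ultimately show ?thesis using phib by (subst nn_integral_eq_integral) auto
  qed
  define \<pi> where "\<pi> = distr P borel g"
  have pi_prob: "prob_space \<pi>" unfolding \<pi>_def P_def
    by (rule prob_space.prob_space_distr) (use gm P_def in \<open>auto intro: prob_space_axioms\<close>)
  have pi_sets: "sets \<pi> = sets borel" unfolding \<pi>_def by simp
  have fstg: "fst \<circ> g = fst" unfolding g_def by auto
  have m1: "distr \<pi> borel fst = \<mu>"
  proof -
    have "distr \<pi> borel fst = distr P borel (fst \<circ> g)"
      unfolding \<pi>_def by (rule distr_distr[OF fst_borel gm])
    also have "\<dots> = distr P \<mu> fst" unfolding fstg
      by (rule distr_cong) (use mu in auto)
    also have "\<dots> = \<mu>" unfolding P_def by (rule U.distr_pair_fst)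
    finally show ?thesis .
  qed
  have m2: "distr \<pi> borel snd = zeta \<alpha> a b x"
  proof (rule measure_eqI)
    show "sets (distr \<pi> borel snd) = sets (zeta \<alpha> a b x)" by (simp add: zeta_sets)
    fix A assume "A \<in> sets (distr \<pi> borel snd)"
    then have A: "A \<in> sets borel" by simp
    have sm: "snd \<circ> g \<in> measurable P borel" using snd_borel gm by (rule measurable_comp[rotated])
    have "distr \<pi> borel snd = distr P borel (snd \<circ> g)"
      unfolding \<pi>_def by (rule distr_distr[OF snd_borel gm])
    then have "emeasure (distr \<pi> borel snd) A = emeasure P ((snd \<circ> g) -` A \<inter> space P)"
      using A sm by (simp add: emeasure_distr)
    also have "\<dots> = (\<integral>\<^sup>+w. emeasure U (Pair w -` ((snd \<circ> g) -` A \<inter> space P)) \<partial>\<mu>)"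
      unfolding P_def by (rule U.emeasure_pair_measure_alt) (use sm A P_def in \<open>auto intro: measurable_sets\<close>)
    also have "\<dots> = (\<integral>\<^sup>+w. ennreal (\<phi> w) * indicator A y + ennreal (1 - \<phi> w) * indicator A z \<partial>\<mu>)"
    proof (rule nn_integral_cong)
      fix w
      have eq: "Pair w -` ((snd \<circ> g) -` A \<inter> space P) = {u. (if u < \<phi> w then y else z) \<in> A}"
        unfolding g_def spP by auto
      show "emeasure U (Pair w -` ((snd \<circ> g) -` A \<inter> space P)) = ennreal (\<phi> w) * indicator A y + ennreal (1 - \<phi> w) * indicator A z"
        unfolding eq U_def by (rule U_split_emeasure) (use phib in auto)
    qed
    also have "\<dots> = ennreal \<alpha> * indicator A y + ennreal (1 - \<alpha>) * indicator A z"
      using phim' by (subst nn_integral_add) (auto simp: nn_integral_multc i1 i2)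
    also have "\<dots> = emeasure (zeta \<alpha> a b x) A"
      using zeta_emeasure[OF alpha01 A] unfolding y_def z_def by simp
    finally show "emeasure (distr \<pi> borel snd) A = emeasure (zeta \<alpha> a b x) A" .
  qed
  have cpl: "\<pi> \<in> couplings \<mu> (zeta \<alpha> a b x)"
    unfolding couplings_def using pi_prob pi_sets m1 m2 by auto
  have Gg: "(\<lambda>p. G (g p)) \<in> borel_measurable P" using G gm by (rule measurable_comp[rotated, unfolded comp_def])
  have "(\<integral>\<^sup>+p. G p \<partial>\<pi>) = (\<integral>\<^sup>+p. G (g p) \<partial>P)"
    unfolding \<pi>_def by (rule nn_integral_distr[OF gm]) (use G in simp)
  also have "\<dots> = (\<integral>\<^sup>+w. \<integral>\<^sup>+u. G (g (w,u)) \<partial>U \<partial>\<mu>)"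
    unfolding P_def by (rule U.nn_integral_fst[symmetric]) (use Gg P_def in simp)
  also have "\<dots> = (\<integral>\<^sup>+w. ennreal (\<phi> w) * G (w, y) + ennreal (1 - \<phi> w) * G (w, z) \<partial>\<mu>)"
  proof (rule nn_integral_cong)
    fix w
    have "(\<integral>\<^sup>+u. G (g (w,u)) \<partial>U) = (\<integral>\<^sup>+u. (\<lambda>v. G (w, v)) (if u < \<phi> w then y else z) \<partial>U)"
      unfolding g_def by (auto intro!: nn_integral_cong)
    also have "\<dots> = ennreal (\<phi> w) * G (w, y) + ennreal (1 - \<phi> w) * G (w, z)"
      unfolding U_def by (rule U_split_integral) (use phib in auto)
    finally show "(\<integral>\<^sup>+u. G (g (w,u)) \<partial>U) = ennreal (\<phi> w) * G (w, y) + ennreal (1 - \<phi> w) * G (w, z)" .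
  qed
  finally show ?thesis using cpl unfolding y_def z_def by blast
qed

lemma Times_borel:
  assumes "D \<in> sets borel" "E \<in> sets borel"
  shows "(D \<times> E) \<in> sets (borel :: ('a::second_countable_topology \<times> 'b::second_countable_topology) measure)"
proof -
  have "D \<times> E = (fst -` D \<inter> space borel) \<inter> (snd -` E \<inter> space borel)" by auto
  then show ?thesis using measurable_sets[OF fst_borel assms(1)] measurable_sets[OF snd_borel assms(2)]
    by (metis sets.Int)
qed

lemma lower_bound:
  fixes \<mu> :: "'a::{real_normed_vector, second_countable_topology} measure"
  assumes cpl: "\<pi> \<in> couplings \<mu> (zeta \<alpha> a b x)" and al: "0 \<le> \<alpha>" "\<alpha> \<le> 1"
    and yz: "a *\<^sub>R x \<noteq> b *\<^sub>R x"
    and mu: "prob_space \<mu>" "sets \<mu> = sets borel"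
    and f: "f \<in> borel_measurable borel" "\<And>p. 0 \<le> f p"
    and D: "D \<in> sets borel" "\<And>w. w \<in> D \<Longrightarrow> f (w, a *\<^sub>R x) + \<epsilon> \<le> f (w, b *\<^sub>R x)" and eps: "0 \<le> \<epsilon>"
  shows "(\<integral>\<^sup>+w. ennreal (min (f (w, a *\<^sub>R x)) (f (w, b *\<^sub>R x))) \<partial>\<mu>) + ennreal \<epsilon> * ennreal (measure \<mu> D - \<alpha>)
     \<le> (\<integral>\<^sup>+p. ennreal (f p) \<partial>\<pi>)"
proof -
  define y where "y = a *\<^sub>R x"
  define z where "z = b *\<^sub>R x"
  define h where "h = (\<lambda>w. min (f (w, y)) (f (w, z)))"
  have pi: "prob_space \<pi>" "sets \<pi> = sets borel" "distr \<pi> borel fst = \<mu>" "distr \<pi> borel snd = zeta \<alpha> a b x"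
    using cpl unfolding couplings_def by auto
  interpret P: prob_space \<pi> by (rule pi(1))
  have sppi: "space \<pi> = UNIV" using sets_eq_imp_space_eq[OF pi(2)] by simp
  have fstm: "fst \<in> measurable \<pi> borel" using fst_borel measurable_cong_sets[OF pi(2) refl] by blast
  have sndm: "snd \<in> measurable \<pi> borel" using snd_borel measurable_cong_sets[OF pi(2) refl] by blast
  have yzne: "y \<noteq> z" using yz y_def z_def by simp
  have hm: "h \<in> borel_measurable borel"
  proof -
    have "(\<lambda>w. (w, y)) \<in> measurable borel (borel \<Otimes>\<^sub>M (borel :: 'a measure))" by measurable
    then have "(\<lambda>w. (w, y)) \<in> measurable borel (borel :: ('a \<times> 'a) measure)" by (metis borel_prod)
    moreover have "(\<lambda>w. (w, z)) \<in> measurable borel (borel \<Otimes>\<^sub>M (borel :: 'a measure))" by measurable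
    then have "(\<lambda>w. (w, z)) \<in> measurable borel (borel :: ('a \<times> 'a) measure)" by (metis borel_prod)
    ultimately have "(\<lambda>w. f (w, y)) \<in> borel_measurable borel" "(\<lambda>w. f (w, z)) \<in> borel_measurable borel"
      using f(1) by (auto intro: measurable_comp[rotated, unfolded comp_def])
    then show ?thesis unfolding h_def by measurable
  qed
  have null: "snd -` (- {y, z}) \<inter> space \<pi> \<in> null_sets \<pi>"
  proof -
    have cs: "- {y, z} \<in> sets borel" by auto
    have "emeasure \<pi> (snd -` (- {y, z}) \<inter> space \<pi>) = emeasure (distr \<pi> borel snd) (- {y,z})"
      using cs sndm by (simp add: emeasure_distr)
    also have "\<dots> = 0" unfolding pi(4) using zeta_emeasure[OF al cs] by (simp add: y_def[symmetric] z_def[symmetric])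
    finally show ?thesis using measurable_sets[OF sndm cs] by auto
  qed
  have Dz: "D \<times> {z} \<in> sets \<pi>" unfolding pi(2) by (rule Times_borel) (use D in auto)
  have pw: "ennreal (h (fst (u, v))) + ennreal \<epsilon> * indicator (D \<times> {z}) (u, v) \<le> ennreal (f (u, v))"
    if "v = y \<or> v = z" for u v
  proof (rule ccontr)
    assume ne: "\<not> ennreal (h (fst (u, v))) + ennreal \<epsilon> * indicator (D \<times> {z}) (u, v) \<le> ennreal (f (u, v))"
      have "v = y \<Longrightarrow> False"
        using ne yzne by (auto simp: h_def intro: ennreal_leI)
      moreover have "v = z \<Longrightarrow> False"
      proof -
        assume vz: "v = z"
        show False
        proof (cases "u \<in> D")
          case True
          then have "h u + \<epsilon> \<le> f (u, z)" using D(2)[of u] unfolding h_def y_def z_def by auto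
          then have "ennreal (h u) + ennreal \<epsilon> \<le> ennreal (f (u, z))"
            using eps f(2) by (metis ennreal_leI ennreal_plus h_def min_def)
          then show False using ne vz True by auto
        next
          case False
          then show False using ne vz by (auto simp: h_def intro: ennreal_leI)
        qed
      qed
      ultimately show False using that by blast
  qed
  have ae: "AE p in \<pi>. ennreal (h (fst p)) + ennreal \<epsilon> * indicator (D \<times> {z}) p \<le> ennreal (f p)"
  proof (rule AE_I'[OF null], rule subsetI, goal_cases)
    case (1 p)
    obtain u v where p: "p = (u, v)" by (cases p)
    have "\<not> (v = y \<or> v = z)" using 1 pw[of v u] unfolding p by blast
    then show ?case unfolding p sppi by simp
  qed
  have A1: "(\<integral>\<^sup>+p. ennreal (h (fst p)) + ennreal \<epsilon> * indicator (D \<times> {z}) p \<partial>\<pi>) \<le> (\<integral>\<^sup>+p. ennreal (f p) \<partial>\<pi>)"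
    by (rule nn_integral_mono_AE[OF ae])
  have A2: "(\<integral>\<^sup>+p. ennreal (h (fst p)) + ennreal \<epsilon> * indicator (D \<times> {z}) p \<partial>\<pi>)
      = (\<integral>\<^sup>+p. ennreal (h (fst p)) \<partial>\<pi>) + ennreal \<epsilon> * emeasure \<pi> (D \<times> {z})"
    using hm fstm Dz by (subst nn_integral_add) (auto simp: nn_integral_cmult_indicator)
  have A3: "(\<integral>\<^sup>+p. ennreal (h (fst p)) \<partial>\<pi>) = (\<integral>\<^sup>+w. ennreal (h w) \<partial>\<mu>)"
  proof -
    have "(\<integral>\<^sup>+w. ennreal (h w) \<partial>distr \<pi> borel fst) = (\<integral>\<^sup>+p. ennreal (h (fst p)) \<partial>\<pi>)"
      by (rule nn_integral_distr[OF fstm]) (use hm in simp)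
    then show ?thesis using pi(3) by simp
  qed
  have A4: "ennreal (measure \<mu> D - \<alpha>) \<le> emeasure \<pi> (D \<times> {z})"
  proof -
    have e1: "measure \<pi> (D \<times> UNIV) = measure \<mu> D"
    proof -
      have "measure \<mu> D = measure (distr \<pi> borel fst) D" using pi(3) by simp
      also have "\<dots> = measure \<pi> (fst -` D \<inter> space \<pi>)" using D(1) fstm by (simp add: measure_distr)
      also have "fst -` D \<inter> space \<pi> = D \<times> UNIV" using sppi by auto
      finally show ?thesis by simp
    qed
    have cz: "- {z} \<in> sets borel" by auto
    have e2: "measure \<pi> (UNIV \<times> - {z}) = \<alpha>"
    proof -
      have "measure (zeta \<alpha> a b x) (- {z}) = \<alpha>"
        using zeta_emeasure[OF al cz] yzne al unfolding measure_def by (simp add: y_def[symmetric] z_def[symmetric])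
      then have "measure (distr \<pi> borel snd) (- {z}) = \<alpha>" using pi(4) by simp
      then have "measure \<pi> (snd -` (- {z}) \<inter> space \<pi>) = \<alpha>" using cz sndm by (simp add: measure_distr)
      moreover have "snd -` (- {z}) \<inter> space \<pi> = UNIV \<times> - {z}" using sppi by auto
      ultimately show ?thesis by simp
    qed
    have s1: "D \<times> UNIV \<in> sets \<pi>" unfolding pi(2) by (rule Times_borel) (use D in auto)
    have s2: "UNIV \<times> - {z} \<in> sets \<pi>" unfolding pi(2) by (rule Times_borel) (use cz in auto)
    have "measure \<pi> (D \<times> UNIV) \<le> measure \<pi> ((D \<times> {z}) \<union> (UNIV \<times> - {z}))"
      using s1 s2 Dz by (intro P.finite_measure_mono) auto
    also have "\<dots> \<le> measure \<pi> (D \<times> {z}) + measure \<pi> (UNIV \<times> - {z})"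
      using s2 Dz by (intro measure_subadditive) (auto simp: P.emeasure_finite)
    finally have "measure \<mu> D - \<alpha> \<le> measure \<pi> (D \<times> {z})" using e1 e2 by simp
    then show ?thesis using P.emeasure_eq_measure by (simp add: ennreal_leI)
  qed
  have "(\<integral>\<^sup>+w. ennreal (h w) \<partial>\<mu>) + ennreal \<epsilon> * ennreal (measure \<mu> D - \<alpha>)
     \<le> (\<integral>\<^sup>+w. ennreal (h w) \<partial>\<mu>) + ennreal \<epsilon> * emeasure \<pi> (D \<times> {z})"
    by (intro add_left_mono mult_left_mono A4) auto
  also have "\<dots> \<le> (\<integral>\<^sup>+p. ennreal (f p) \<partial>\<pi>)" using A1 A2 A3 by simp
  finally show ?thesis unfolding h_def y_def z_def .
qed

lemma slice_meas:
  assumes "f \<in> borel_measurable (borel :: ('a::second_countable_topology \<times> 'b::second_countable_topology) measure)"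
  shows "(\<lambda>w. f (w, y)) \<in> borel_measurable borel"
proof -
  have "(\<lambda>w. (w, y)) \<in> measurable borel (borel \<Otimes>\<^sub>M (borel :: 'b measure))" by measurable
  then have "(\<lambda>w. (w, y)) \<in> measurable borel (borel :: ('a \<times> 'b) measure)" by (metis borel_prod)
  then show ?thesis using assms by (auto intro: measurable_comp[rotated, unfolded comp_def])
qed

lemma powr_sum_bound:
  fixes s t p :: real
  assumes "0 \<le> s" "0 \<le> t" "0 < p"
  shows "(s + t) powr p \<le> 2 powr p * (s powr p + t powr p)"
proof -
  have "(s + t) powr p \<le> (2 * max s t) powr p" using assms by (intro powr_mono2) auto
  also have "\<dots> = 2 powr p * max s t powr p" using assms by (simp add: powr_mult)
  also have "max s t powr p \<le> s powr p + t powr p" by (cases "s \<le> t") (auto simp: max_def)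
  then have "2 powr p * max s t powr p \<le> 2 powr p * (s powr p + t powr p)" by simp
  finally show ?thesis .
qed

lemma strict_gap:
  fixes \<mu> :: "'a::{real_normed_vector, second_countable_topology} measure"
  assumes mu: "prob_space \<mu>" "sets \<mu> = sets borel"
    and yz: "a *\<^sub>R x \<noteq> b *\<^sub>R x"
    and f: "f \<in> borel_measurable borel" "\<And>p. 0 \<le> f p"
    and fin: "(\<integral>\<^sup>+w. ennreal (min (f (w, a *\<^sub>R x)) (f (w, b *\<^sub>R x))) \<partial>\<mu>) < \<infinity>"
    and al: "0 \<le> \<alpha>" "\<alpha> < measure \<mu> {w. f (w, a *\<^sub>R x) < f (w, b *\<^sub>R x)}"
  shows "(\<integral>\<^sup>+w. ennreal (min (f (w, a *\<^sub>R x)) (f (w, b *\<^sub>R x))) \<partial>\<mu>)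
     < (INF \<pi>\<in>couplings \<mu> (zeta \<alpha> a b x). \<integral>\<^sup>+p. ennreal (f p) \<partial>\<pi>)"
proof -
  interpret M: prob_space \<mu> by (rule mu)
  define y where "y = a *\<^sub>R x"
  define z where "z = b *\<^sub>R x"
  define L where "L = (\<integral>\<^sup>+w. ennreal (min (f (w, y)) (f (w, z))) \<partial>\<mu>)"
  define Dn where "Dn = (\<lambda>n::nat. {w. f (w, y) + 1 / Suc n \<le> f (w, z)})"
  have fy: "(\<lambda>w. f (w, y)) \<in> borel_measurable borel" by (rule slice_meas[OF f(1)])
  have fz: "(\<lambda>w. f (w, z)) \<in> borel_measurable borel" by (rule slice_meas[OF f(1)])
  have Dsets: "Dn n \<in> sets borel" for n unfolding Dn_def using fy fz by measurable
  have inc: "incseq Dn"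
  proof (rule incseq_SucI)
    fix n
    have "1 / real (Suc (Suc n)) \<le> 1 / real (Suc n)" by (simp add: frac_le)
    then show "Dn n \<subseteq> Dn (Suc n)" unfolding Dn_def by auto
  qed
  have Un: "(\<Union>n. Dn n) = {w. f (w, y) < f (w, z)}"
  proof safe
    fix w n assume "w \<in> Dn n"
    then show "f (w, y) < f (w, z)" unfolding Dn_def
      by (smt (verit) divide_pos_pos mem_Collect_eq of_nat_0_less_iff zero_less_Suc)
  next
    fix w assume "f (w, y) < f (w, z)"
    then obtain n where "1 / Suc n < f (w, z) - f (w, y)"
      using reals_Archimedean[of "f (w, z) - f (w, y)"] by (auto simp: inverse_eq_divide)
    then have "f (w, y) + 1 / Suc n \<le> f (w, z)" by simp
    then show "w \<in> (\<Union>n. Dn n)" unfolding Dn_def by blast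
  qed
  have "(\<lambda>n. measure \<mu> (Dn n)) \<longlonglongrightarrow> measure \<mu> (\<Union>n. Dn n)"
    by (rule M.finite_Lim_measure_incseq) (use Dsets inc mu(2) in auto)
  then have "eventually (\<lambda>n. \<alpha> < measure \<mu> (Dn n)) sequentially"
    using al(2) unfolding Un y_def z_def by (rule order_tendstoD)
  then obtain n where n: "\<alpha> < measure \<mu> (Dn n)" by (meson eventually_sequentially order.refl)
  define \<epsilon> where "\<epsilon> = 1 / real (Suc n)"
  have eps: "0 < \<epsilon>" unfolding \<epsilon>_def by simp
  have al1: "\<alpha> \<le> 1" using n M.prob_le_1[of "Dn n"] by linarith
  have lb: "L + ennreal \<epsilon> * ennreal (measure \<mu> (Dn n) - \<alpha>) \<le> (INF \<pi>\<in>couplings \<mu> (zeta \<alpha> a b x). \<integral>\<^sup>+p. ennreal (f p) \<partial>\<pi>)"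
  proof (rule INF_greatest)
    fix \<pi> assume "\<pi> \<in> couplings \<mu> (zeta \<alpha> a b x)"
    from lower_bound[OF this al(1) al1 yz mu f Dsets[of n], of \<epsilon>] eps
    show "L + ennreal \<epsilon> * ennreal (measure \<mu> (Dn n) - \<alpha>) \<le> \<integral>\<^sup>+p. ennreal (f p) \<partial>\<pi>"
      unfolding L_def y_def z_def Dn_def \<epsilon>_def by auto
  qed
  have "0 < ennreal \<epsilon> * ennreal (measure \<mu> (Dn n) - \<alpha>)" using eps n
    by (simp add: ennreal_mult[symmetric] del: ennreal_mult)
  then have "L + 0 < L + ennreal \<epsilon> * ennreal (measure \<mu> (Dn n) - \<alpha>)"
    using fin unfolding L_def y_def z_def by (subst ennreal_add_left_cancel_less) auto
  then have "L < L + ennreal \<epsilon> * ennreal (measure \<mu> (Dn n) - \<alpha>)" by simp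
  then have "L < (INF \<pi>\<in>couplings \<mu> (zeta \<alpha> a b x). \<integral>\<^sup>+p. ennreal (f p) \<partial>\<pi>)"
    using lb by (rule order.strict_trans2)
  then show ?thesis unfolding L_def y_def z_def .
qed

lemma powr_eq_iff_nonneg:
  fixes s t p :: real
  assumes "0 < p" "0 \<le> s" "0 \<le> t"
  shows "(s powr p = t powr p) = (s = t)"
proof
  assume e: "s powr p = t powr p"
  show "s = t"
  proof (cases s t rule: linorder_cases)
    case less then show ?thesis using powr_less_mono2[OF assms(1) assms(2) less] e by simp
  next
    case greater then show ?thesis using powr_less_mono2[OF assms(1) assms(3) greater] e by simp
  qed
qed simp

theorem lemma3p17:
  fixes \<mu> :: "'a::{real_inner, complete_space, second_countable_topology} measure"
    and p a b :: real and x :: 'a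
  assumes "0 < p" and "\<mu> \<in> Wp_space p" and "x \<noteq> 0" and "a \<noteq> b"
  defines "m \<equiv> (INF \<alpha>\<in>{0..1}. wasserstein p \<mu> (zeta \<alpha> a b x))"
  defines "S \<equiv> {\<alpha>\<in>{0..1}. wasserstein p \<mu> (zeta \<alpha> a b x) = m}"
  shows "measure \<mu> (bisector (a *\<^sub>R x) (b *\<^sub>R x)) = Sup S - Inf S"
proof -
  note p = assms(1)
  have mu: "prob_space \<mu>" "sets \<mu> = sets borel" and mom: "(\<integral>\<^sup>+ w. ennreal (norm w powr p) \<partial>\<mu>) < \<infinity>"
    using assms(2) unfolding Wp_space_def by auto
  interpret M: prob_space \<mu> by (rule mu(1))
  have spmu: "space \<mu> = UNIV" using sets_eq_imp_space_eq[OF mu(2)] by simp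
  define y where "y = a *\<^sub>R x"
  define z where "z = b *\<^sub>R x"
  have yz: "a *\<^sub>R x \<noteq> b *\<^sub>R x" using assms(3,4) by simp
  define c where "c = (\<lambda>q::'a \<times> 'a. norm (fst q - snd q) powr p)"
  have cm: "c \<in> borel_measurable borel" unfolding c_def
    by (subst borel_prod[symmetric]) measurable
  have c0: "\<And>q. 0 \<le> c q" unfolding c_def by simp
  define K where "K = (\<lambda>\<alpha>. INF \<pi>\<in>couplings \<mu> (zeta \<alpha> a b x). \<integral>\<^sup>+q. ennreal (c q) \<partial>\<pi>)"
  define q where "q = min (1/p) 1"
  have q0: "0 < q" unfolding q_def using p by simp
  have W: "wasserstein p \<mu> (zeta \<alpha> a b x) = enn2real (K \<alpha>) powr q" for \<alpha>
    unfolding wasserstein_def K_def c_def q_def by simp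
  have cslice: "(\<lambda>w. c (w, v)) \<in> borel_measurable borel" for v by (rule slice_meas[OF cm])
  have finv: "(\<integral>\<^sup>+w. ennreal (c (w, v)) \<partial>\<mu>) < \<infinity>" for v
  proof -
    have "(\<integral>\<^sup>+w. ennreal (c (w, v)) \<partial>\<mu>) \<le> (\<integral>\<^sup>+w. ennreal (2 powr p) * (ennreal (norm w powr p) + ennreal (norm v powr p)) \<partial>\<mu>)"
    proof (rule nn_integral_mono)
      fix w
      have "c (w, v) \<le> (norm w + norm v) powr p" unfolding c_def
        using p by (intro powr_mono2) (auto simp: norm_triangle_ineq4)
      also have "\<dots> \<le> 2 powr p * (norm w powr p + norm v powr p)" by (rule powr_sum_bound) (use p in auto)
      finally show "ennreal (c (w, v)) \<le> ennreal (2 powr p) * (ennreal (norm w powr p) + ennreal (norm v powr p))"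
        by (simp add: ennreal_mult[symmetric] ennreal_plus[symmetric] ennreal_leI del: ennreal_plus)
    qed
    also have "\<dots> = ennreal (2 powr p) * ((\<integral>\<^sup>+w. ennreal (norm w powr p) \<partial>\<mu>) + ennreal (norm v powr p))"
      using mu(2) by (subst nn_integral_cmult, simp add: measurable_cong_sets[OF mu(2) refl],
          subst nn_integral_add) (auto simp: measurable_cong_sets[OF mu(2) refl] M.emeasure_space_1)
    also have "\<dots> < \<infinity>" using mom by (simp add: ennreal_mult_less_top)
    finally show ?thesis .
  qed
  define L where "L = (\<integral>\<^sup>+w. ennreal (min (c (w, y)) (c (w, z))) \<partial>\<mu>)"
  have Lfin: "L < \<infinity>"
  proof -
    have "L \<le> (\<integral>\<^sup>+w. ennreal (c (w, y)) \<partial>\<mu>)" unfolding L_def by (intro nn_integral_mono) (simp add: ennreal_leI)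
    then show ?thesis using finv[of y] by simp
  qed
  have Klow: "L \<le> K \<alpha>" if "0 \<le> \<alpha>" "\<alpha> \<le> 1" for \<alpha>
    unfolding K_def
  proof (rule INF_greatest)
    fix \<pi> assume "\<pi> \<in> couplings \<mu> (zeta \<alpha> a b x)"
    from lower_bound[OF this that yz mu cm c0, of "{}" 0]
    show "L \<le> \<integral>\<^sup>+q. ennreal (c q) \<partial>\<pi>" unfolding L_def y_def z_def by simp
  qed
  have Kfin: "K \<alpha> < \<infinity>" if al: "0 \<le> \<alpha>" "\<alpha> \<le> 1" for \<alpha>
  proof -
    obtain \<pi> where pi: "\<pi> \<in> couplings \<mu> (zeta \<alpha> a b x)"
      and pic: "(\<integral>\<^sup>+q. ennreal (c q) \<partial>\<pi>) = (\<integral>\<^sup>+w. ennreal \<alpha> * ennreal (c (w, y)) + ennreal (1 - \<alpha>) * ennreal (c (w, z)) \<partial>\<mu>)"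
    proof -
      have "\<exists>\<pi>\<in>couplings \<mu> (zeta \<alpha> a b x). (\<integral>\<^sup>+q. ennreal (c q) \<partial>\<pi>) = (\<integral>\<^sup>+w. ennreal \<alpha> * ennreal (c (w, a *\<^sub>R x)) + ennreal (1 - \<alpha>) * ennreal (c (w, b *\<^sub>R x)) \<partial>\<mu>)"
        by (rule coupling_exists[OF mu]) (use al cm in \<open>auto simp: M.prob_space\<close>)
      then show ?thesis using that unfolding y_def z_def by blast
    qed
    have "K \<alpha> \<le> (\<integral>\<^sup>+q. ennreal (c q) \<partial>\<pi>)" unfolding K_def using pi by (rule INF_lower)
    also have "\<dots> \<le> (\<integral>\<^sup>+w. ennreal (c (w, y)) + ennreal (c (w, z)) \<partial>\<mu>)" unfolding pic
    proof (rule nn_integral_mono)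
      fix w
      have "ennreal \<alpha> * ennreal (c (w, y)) \<le> 1 * ennreal (c (w, y))"
        using al by (intro mult_right_mono) auto
      moreover have "ennreal (1 - \<alpha>) * ennreal (c (w, z)) \<le> 1 * ennreal (c (w, z))"
        using al by (intro mult_right_mono) auto
      ultimately show "ennreal \<alpha> * ennreal (c (w, y)) + ennreal (1 - \<alpha>) * ennreal (c (w, z)) \<le> ennreal (c (w, y)) + ennreal (c (w, z))"
        by (metis add_mono mult_1)
    qed
    also have "\<dots> = (\<integral>\<^sup>+w. ennreal (c (w, y)) \<partial>\<mu>) + (\<integral>\<^sup>+w. ennreal (c (w, z)) \<partial>\<mu>)"
      using cslice by (intro nn_integral_add) (auto simp: measurable_cong_sets[OF mu(2) refl])
    also have "\<dots> < \<infinity>" using finv[of y] finv[of z] by simp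
    finally show ?thesis .
  qed
  define A0 where "A0 = {w. c (w, y) < c (w, z)}"
  define B0 where "B0 = {w. c (w, y) = c (w, z)}"
  define \<alpha>0 where "\<alpha>0 = measure \<mu> A0"
  define \<alpha>1 where "\<alpha>1 = measure \<mu> {w. c (w, y) \<le> c (w, z)}"
  have A0s: "A0 \<in> sets \<mu>" unfolding A0_def mu(2) using cslice by measurable
  have B0s: "B0 \<in> sets \<mu>" unfolding B0_def mu(2) using cslice by measurable
  have a1: "\<alpha>1 = \<alpha>0 + measure \<mu> B0"
  proof -
    have "{w. c (w, y) \<le> c (w, z)} = A0 \<union> B0" unfolding A0_def B0_def by auto
    moreover have "A0 \<inter> B0 = {}" unfolding A0_def B0_def by auto
    ultimately show ?thesis unfolding \<alpha>1_def \<alpha>0_def using M.finite_measure_Union[OF A0s B0s] by simp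
  qed
  have a0pos: "0 \<le> \<alpha>0" unfolding \<alpha>0_def by simp
  have a1le: "\<alpha>1 \<le> 1" unfolding \<alpha>1_def by simp
  have a01: "\<alpha>0 \<le> \<alpha>1" using a1 by simp
  have Kmid: "K \<alpha> \<le> L" if al: "\<alpha>0 \<le> \<alpha>" "\<alpha> \<le> \<alpha>1" for \<alpha>
  proof -
    define t where "t = (if measure \<mu> B0 = 0 then 0 else (\<alpha> - \<alpha>0) / measure \<mu> B0)"
    have t01: "0 \<le> t" "t \<le> 1" using al a1 unfolding t_def by (auto simp: field_simps)
    have tB: "\<alpha>0 + t * measure \<mu> B0 = \<alpha>" using al a1 unfolding t_def by auto
    define \<phi> where "\<phi> = (\<lambda>w. indicator A0 w + t * indicator B0 w :: real)"
    have phim: "\<phi> \<in> borel_measurable borel" unfolding \<phi>_def using A0s B0s mu(2) by measurable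
    have phib: "0 \<le> \<phi> w \<and> \<phi> w \<le> 1" for w
      using t01 unfolding \<phi>_def A0_def B0_def by (auto simp: indicator_def)
    have phii: "(\<integral>w. \<phi> w \<partial>\<mu>) = \<alpha>"
    proof -
      have "(\<integral>w. \<phi> w \<partial>\<mu>) = (\<integral>w. indicator A0 w \<partial>\<mu>) + (\<integral>w. t * indicator B0 w \<partial>\<mu>)"
        unfolding \<phi>_def using A0s B0s
        by (intro Bochner_Integration.integral_add) (auto intro!: integrable_real_indicator simp: M.emeasure_finite less_top[symmetric])
      also have "\<dots> = \<alpha>0 + t * measure \<mu> B0" unfolding \<alpha>0_def using spmu by simp
      finally show ?thesis using tB by simp
    qed
    have "\<exists>\<pi>\<in>couplings \<mu> (zeta \<alpha> a b x). (\<integral>\<^sup>+q. ennreal (c q) \<partial>\<pi>) = (\<integral>\<^sup>+w. ennreal (\<phi> w) * ennreal (c (w, a *\<^sub>R x)) + ennreal (1 - \<phi> w) * ennreal (c (w, b *\<^sub>R x)) \<partial>\<mu>)"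
      by (rule coupling_exists[OF mu phim phib phii]) (use cm in auto)
    then obtain \<pi> where pi: "\<pi> \<in> couplings \<mu> (zeta \<alpha> a b x)"
      and pic: "(\<integral>\<^sup>+q. ennreal (c q) \<partial>\<pi>) = (\<integral>\<^sup>+w. ennreal (\<phi> w) * ennreal (c (w, y)) + ennreal (1 - \<phi> w) * ennreal (c (w, z)) \<partial>\<mu>)"
      unfolding y_def z_def by blast
    have "K \<alpha> \<le> (\<integral>\<^sup>+q. ennreal (c q) \<partial>\<pi>)" unfolding K_def using pi by (rule INF_lower)
    also have "\<dots> = L" unfolding pic L_def
    proof (rule nn_integral_cong)
      fix w
      consider "w \<in> A0" | "w \<in> B0" | "c (w, z) < c (w, y)" unfolding A0_def B0_def by force
      then show "ennreal (\<phi> w) * ennreal (c (w, y)) + ennreal (1 - \<phi> w) * ennreal (c (w, z)) = ennreal (min (c (w, y)) (c (w, z)))"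
      proof cases
        case 1
        then have "w \<notin> B0" unfolding A0_def B0_def by auto
        then show ?thesis using 1 unfolding \<phi>_def A0_def by simp
      next
        case 2
        then have "w \<notin> A0" unfolding A0_def B0_def by auto
        then have "ennreal (\<phi> w) * ennreal (c (w, y)) + ennreal (1 - \<phi> w) * ennreal (c (w, z))
            = (ennreal t + ennreal (1 - t)) * ennreal (c (w, y))"
          using 2 unfolding \<phi>_def B0_def by (simp add: distrib_right)
        also have "ennreal t + ennreal (1 - t) = 1" using t01 by (simp add: ennreal_plus[symmetric] del: ennreal_plus)
        finally show ?thesis using 2 unfolding B0_def by simp
      next
        case 3
        then have "w \<notin> A0" "w \<notin> B0" unfolding A0_def B0_def by auto
        then show ?thesis using 3 unfolding \<phi>_def by simp
      qed
    qed
    finally show ?thesis .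
  qed
  have Kout: "L < K \<alpha>" if al: "0 \<le> \<alpha>" "\<alpha> \<le> 1" "\<alpha> < \<alpha>0 \<or> \<alpha>1 < \<alpha>" for \<alpha>
  proof (cases "\<alpha> < \<alpha>0")
    case True
    show ?thesis unfolding K_def L_def y_def z_def
      by (rule strict_gap[OF mu yz cm c0]) (use Lfin True al in \<open>auto simp: L_def y_def z_def \<alpha>0_def A0_def\<close>)
  next
    case False
    then have lt: "\<alpha>1 < \<alpha>" using al by simp
    have eqm: "measure \<mu> {w. c (w, z) < c (w, y)} = 1 - \<alpha>1"
    proof -
      have "{w. c (w, z) < c (w, y)} = space \<mu> - {w. c (w, y) \<le> c (w, z)}" using spmu by auto
      moreover have "{w. c (w, y) \<le> c (w, z)} \<in> sets \<mu>" unfolding mu(2) using cslice by measurable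
      ultimately show ?thesis unfolding \<alpha>1_def using M.prob_compl by simp
    qed
    have Lsw: "L = (\<integral>\<^sup>+w. ennreal (min (c (w, b *\<^sub>R x)) (c (w, a *\<^sub>R x))) \<partial>\<mu>)"
      unfolding L_def y_def z_def by (simp add: min.commute)
    have "L < (INF \<pi>\<in>couplings \<mu> (zeta (1 - \<alpha>) b a x). \<integral>\<^sup>+q. ennreal (c q) \<partial>\<pi>)"
      unfolding Lsw
      by (rule strict_gap[OF mu _ cm c0]) (use yz Lfin Lsw lt al eqm in \<open>auto simp: y_def z_def\<close>)
    then show ?thesis unfolding K_def using zeta_swap[of \<alpha> a b x] by simp
  qed
  define l0 where "l0 = enn2real L"
  have Ll0: "L = ennreal l0" "0 \<le> l0" unfolding l0_def using Lfin by auto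
  define w0 where "w0 = l0 powr q"
  have Weq: "wasserstein p \<mu> (zeta \<alpha> a b x) = w0" if "\<alpha> \<in> {\<alpha>0..\<alpha>1}" for \<alpha>
  proof -
    have "K \<alpha> = L" using Kmid[of \<alpha>] Klow[of \<alpha>] that a0pos a1le by (auto intro: antisym)
    then show ?thesis unfolding W w0_def l0_def by simp
  qed
  have Wgt: "w0 < wasserstein p \<mu> (zeta \<alpha> a b x)" if "\<alpha> \<in> {0..1}" "\<alpha> \<notin> {\<alpha>0..\<alpha>1}" for \<alpha>
  proof -
    have fin: "K \<alpha> < \<infinity>" and lt: "L < K \<alpha>" using Kfin[of \<alpha>] Kout[of \<alpha>] that by auto
    define k where "k = enn2real (K \<alpha>)"
    have "K \<alpha> = ennreal k" unfolding k_def using fin by simp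
    then have "l0 < k" using lt Ll0 by (simp add: ennreal_less_iff)
    then have "l0 powr q < k powr q" using q0 Ll0(2) by (intro powr_less_mono2) auto
    then show ?thesis unfolding W w0_def k_def .
  qed
  have a0in: "\<alpha>0 \<in> {0..1}" "\<alpha>0 \<in> {\<alpha>0..\<alpha>1}" using a0pos a01 a1le by auto
  have mw: "m = w0" unfolding m_def
  proof (rule cInf_eq_minimum)
    show "w0 \<in> (\<lambda>\<alpha>. wasserstein p \<mu> (zeta \<alpha> a b x)) ` {0..1}"
      using Weq[OF a0in(2)] a0in(1) by (metis image_eqI)
  next
    fix v assume "v \<in> (\<lambda>\<alpha>. wasserstein p \<mu> (zeta \<alpha> a b x)) ` {0..1}"
    then obtain \<alpha> where "\<alpha> \<in> {0..1}" "v = wasserstein p \<mu> (zeta \<alpha> a b x)" by auto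
    then show "w0 \<le> v" using Weq[of \<alpha>] Wgt[of \<alpha>] by (cases "\<alpha> \<in> {\<alpha>0..\<alpha>1}") auto
  qed
  have Seq: "S = {\<alpha>0..\<alpha>1}"
  proof (rule set_eqI)
    fix \<alpha>
    show "\<alpha> \<in> S \<longleftrightarrow> \<alpha> \<in> {\<alpha>0..\<alpha>1}"
      unfolding S_def mw using Weq[of \<alpha>] Wgt[of \<alpha>] a0pos a1le by (cases "\<alpha> \<in> {\<alpha>0..\<alpha>1}") auto
  qed
  have bis: "bisector (a *\<^sub>R x) (b *\<^sub>R x) = B0"
  proof (rule set_eqI)
    fix w
    have "(norm (y - w) = norm (z - w)) = (c (w, y) = c (w, z))"
      unfolding c_def using powr_eq_iff_nonneg[OF p, of "norm (w - y)" "norm (w - z)"]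
      by (simp add: norm_minus_commute)
    then show "w \<in> bisector (a *\<^sub>R x) (b *\<^sub>R x) \<longleftrightarrow> w \<in> B0"
      unfolding bisector_def B0_def y_def z_def by simp
  qed
  show ?thesis unfolding bis Seq using a01 a1 by simp
qed

end
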